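(* Let $r,k\in\mathbb Z$ with $0\le k\le r$ and suppose Assumption (A1) holds. Then for every $\hat v\in C^{k_{\mathcal J}+1}([-1,1])$ the conditions (J1)–(J3) below determine a unique polynomial $\widehat{\mathcal J}\hat v\in P_r([-1,1])$, i.e. $\widehat{\mathcal J}$ is well defined. Moreover, if $\widehat{\mathcal I}$ preserves polynomials up to degree $\tilde r$ (i.e. $\widehat{\mathcal I}p=p$ for all $p\in P_{\tilde r}([-1,1])$), then $\widehat{\mathcal J}$ preserves polynomials up to degree $\min\{\tilde r+1,r\}$.
   Context: $P_s(J)$ denotes polynomials of degree at most $s$ on $J$; $\delta_{i,j}$ is the Kronecker symbol; $\lfloor\cdot\rfloor$ is the floor function (so $\lfloor (k-1)/2\rfloor=-1$ for $k=0$); sums with upper limit below the lower limit are empty. $\widehat{\mathscr I}$ is a linear functional (the reference integrator) and $\widehat{\mathcal I}$ a linear operator (the reference approximation operator); $k_{\mathscr I}\ge0$ and $k_{\mathcal I}\ge0$ are the smallest integers such that $\widehat{\mathscr I}$ is well defined on $C^{k_{\mathscr I}}([-1,1])$ and $\widehat{\mathcal I}$ is well defined on $C^{k_{\mathcal I}}([-1,1])$; moreover $\widehat{\mathcal I}\hat v\in C^{l}([-1,1])$ whenever $\hat v\in C^{\max\{k_{\mathcal I},l\}}([-1,1])$. Set $k_{\mathcal J}:=\max\{\lfloor k/2\rfloor-1,k_{\mathscr I},k_{\mathcal I}\}$. Assumption (A1): whenever $\hat\psi\in P_{r-\max\{1,k\}}([-1,1])$ satisfies $\widehat{\mathscr I}\big[(1-\hat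 t)^{\lfloor k/2\rfloor}(1+\hat t)^{|\lfloor (k-1)/2\rfloor|}\hat\psi\,\hat\varphi\big]=0$ for all $\hat\varphi\in P_{r-\max\{1,k\}}([-1,1])$, then $\hat\psi\equiv0$. Definition of $\widehat{\mathcal J}\hat v\in P_r([-1,1])$: (J1) if $k\ge1$: $(\widehat{\mathcal J}\hat v)^{(i)}(-1)=\hat v^{(i)}(-1)$ for $i=0,\dots,\lfloor (k-1)/2\rfloor$; (J2) if $k\ge2$: $(\widehat{\mathcal J}\hat v)^{(i)}(1)=\hat v^{(i)}(1)$ for $i=1,\dots,\lfloor k/2\rfloor$; (J3) $\widehat{\mathscr I}[(\widehat{\mathcal J}\hat v)'\hat\varphi]+\delta_{0,k}(\widehat{\mathcal J}\hat v)(-1)\hat\varphi(-1)=\widehat{\mathscr I}[(\widehat{\mathcal I}(\hat v'))\hat\varphi]+\delta_{0,k}\hat v(-1)\hat\varphi(-1)$ for all $\hat\varphi\in P_{r-k}([-1,1])$. *)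

theory Defs
  imports "HOL-Analysis.Analysis" "HOL-Computational_Algebra.Polynomial"
begin

definition cderiv :: "(real \<Rightarrow> real) \<Rightarrow> real \<Rightarrow> real" where
  "cderiv f = (\<lambda>x. vector_derivative f (at x within {-1..1}))"

definition cdiff :: "nat \<Rightarrow> (real \<Rightarrow> real) \<Rightarrow> real \<Rightarrow> real" where
  "cdiff n f = (cderiv ^^ n) f"

definition Ck :: "nat \<Rightarrow> (real \<Rightarrow> real) \<Rightarrow> bool" where
  "Ck k f \<longleftrightarrow>
     (\<forall>i\<le>k. continuous_on {-1..1} (cdiff i f)) \<and>
     (\<forall>i<k. \<forall>x\<in>{-1..1}. (cdiff i f has_real_derivative cdiff (Suc i) f x) (at x within {-1..1}))"

definition inP :: "int \<Rightarrow> real poly \<Rightarrow> bool" where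
  "inP s p \<longleftrightarrow> (if s < 0 then p = 0 else int (degree p) \<le> s)"

text \<open>The exponent |floor((k-1)/2)| (equal to 1 for k = 0).\<close>
definition absfl :: "nat \<Rightarrow> nat" where
  "absfl k = (if k = 0 then 1 else (k - 1) div 2)"

definition A1 :: "nat \<Rightarrow> nat \<Rightarrow> ((real \<Rightarrow> real) \<Rightarrow> real) \<Rightarrow> bool" where
  "A1 r k Iscr \<longleftrightarrow>
     (\<forall>\<psi>. inP (int r - int (max 1 k)) \<psi> \<longrightarrow>
        (\<forall>\<phi>. inP (int r - int (max 1 k)) \<phi> \<longrightarrow>
            Iscr (\<lambda>t. (1 - t) ^ (k div 2) * (1 + t) ^ absfl k * poly \<psi> t * poly \<phi> t) = 0)
        \<longrightarrow> \<psi> = 0)"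

definition J_conds :: "nat \<Rightarrow> nat \<Rightarrow> ((real \<Rightarrow> real) \<Rightarrow> real) \<Rightarrow>
    ((real \<Rightarrow> real) \<Rightarrow> (real \<Rightarrow> real)) \<Rightarrow> (real \<Rightarrow> real) \<Rightarrow> real poly \<Rightarrow> bool" where
  "J_conds r k Iscr Ical v q \<longleftrightarrow>
     (1 \<le> k \<longrightarrow> (\<forall>i\<le>(k - 1) div 2. poly ((pderiv ^^ i) q) (-1) = cdiff i v (-1))) \<and>
     (2 \<le> k \<longrightarrow> (\<forall>i\<in>{1..k div 2}. poly ((pderiv ^^ i) q) 1 = cdiff i v 1)) \<and>
     (\<forall>\<phi>. inP (int r - int k) \<phi> \<longrightarrow>
        Iscr (\<lambda>t. poly (pderiv q) t * poly \<phi> t)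
          + (if k = 0 then poly q (-1) * poly \<phi> (-1) else 0)
        = Iscr (\<lambda>t. Ical (cdiff 1 v) t * poly \<phi> t)
          + (if k = 0 then v (-1) * poly \<phi> (-1) else 0))"

definition Jhat :: "nat \<Rightarrow> nat \<Rightarrow> ((real \<Rightarrow> real) \<Rightarrow> real) \<Rightarrow>
    ((real \<Rightarrow> real) \<Rightarrow> (real \<Rightarrow> real)) \<Rightarrow> (real \<Rightarrow> real) \<Rightarrow> real poly" where
  "Jhat r k Iscr Ical v = (THE q. degree q \<le> r \<and> J_conds r k Iscr Ical v q)"

end

theory Submission
  imports Defs
begin


lemma cdiff_0[simp]: "cdiff 0 f = f" by (simp add: cdiff_def)
lemma cdiff_Suc: "cdiff (Suc i) f = cderiv (cdiff i f)" by (simp add: cdiff_def)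
lemma cdiff_shift: "cdiff i (cdiff 1 f) = cdiff (Suc i) f"
  by (simp add: cdiff_def funpow_Suc_right del: funpow.simps)

lemma Ck_char:
  assumes g0: "\<forall>x\<in>{-1..1}. g 0 x = f x"
  and gc: "\<forall>i\<le>n. continuous_on {-1..1} (g i)"
  and gd: "\<forall>i<n. \<forall>x\<in>{-1..1}. (g i has_real_derivative g (Suc i) x) (at x within {-1..1})"
  shows "Ck n f \<and> (\<forall>i\<le>n. \<forall>x\<in>{-1..1}. cdiff i f x = g i x)"
proof -
  have eq: "\<forall>x\<in>{-1..1}. cdiff i f x = g i x" if "i \<le> n" for i
    using that
  proof (induction i)
    case 0 then show ?case using g0 by simp
  next
    case (Suc i)
    show ?case
    proof
      fix x :: real assume x: "x \<in> {-1..1}"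
      have "(g i has_real_derivative g (Suc i) x) (at x within {-1..1})" using gd Suc x by auto
      have IH: "\<And>y. y \<in> {-1..1} \<Longrightarrow> g i y = cdiff i f y" using Suc by simp
      have "(cdiff i f has_real_derivative g (Suc i) x) (at x within {-1..1})"
        by (rule has_field_derivative_transform_within[where d=1, OF \<open>(g i has_real_derivative _) _\<close> _ x]) (simp_all add: IH)
      then have "vector_derivative (cdiff i f) (at x within {-1..1}) = g (Suc i) x"
        by (intro vector_derivative_within_closed_interval) (use x in \<open>auto simp: has_real_derivative_iff_has_vector_derivative\<close>)
      then show "cdiff (Suc i) f x = g (Suc i) x" by (simp add: cdiff_Suc cderiv_def)
    qed
  qed
  have "Ck n f"
    unfolding Ck_def
  proof (intro conjI allI impI ballI)
    fix i assume "i \<le> n"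
    then show "continuous_on {-1..1} (cdiff i f)"
      using continuous_on_eq[OF gc[rule_format, OF \<open>i \<le> n\<close>]] eq by auto
  next
    fix i x assume i: "i < n" and x: "x \<in> {-1..(1::real)}"
    have "(g i has_real_derivative g (Suc i) x) (at x within {-1..1})" using gd i x by auto
    have IH: "\<And>y. y \<in> {-1..1} \<Longrightarrow> g i y = cdiff i f y" using eq[of i] i by simp
    have "(cdiff i f has_real_derivative g (Suc i) x) (at x within {-1..1})"
        by (rule has_field_derivative_transform_within[where d=1, OF \<open>(g i has_real_derivative _) _\<close> _ x]) (simp_all add: IH)
    moreover have "g (Suc i) x = cdiff (Suc i) f x" using eq[of "Suc i"] i x by simp
    ultimately show "(cdiff i f has_real_derivative cdiff (Suc i) f x) (at x within {-1..1})" by simp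
  qed
  then show ?thesis using eq by auto
qed

lemma Ck_iff: "Ck n f \<longleftrightarrow> (\<exists>g. (\<forall>x\<in>{-1..1}. g 0 x = f x) \<and> (\<forall>i\<le>n. continuous_on {-1..1} (g i)) \<and>
   (\<forall>i<n. \<forall>x\<in>{-1..1}. (g i has_real_derivative g (Suc i) x) (at x within {-1..1})))"
proof
  assume "Ck n f" then show "\<exists>g. (\<forall>x\<in>{-1..1}. g 0 x = f x) \<and> (\<forall>i\<le>n. continuous_on {-1..1} (g i)) \<and>
   (\<forall>i<n. \<forall>x\<in>{-1..1}. (g i has_real_derivative g (Suc i) x) (at x within {-1..1}))" by (intro exI[of _ "\<lambda>i. cdiff i f"]) (auto simp: Ck_def)
next
  assume "\<exists>g. (\<forall>x\<in>{-1..1}. g 0 x = f x) \<and> (\<forall>i\<le>n. continuous_on {-1..1} (g i)) \<and>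
   (\<forall>i<n. \<forall>x\<in>{-1..1}. (g i has_real_derivative g (Suc i) x) (at x within {-1..1}))"
  then show "Ck n f" using Ck_char by blast
qed

lemma Ck_mono: "Ck n f \<Longrightarrow> m \<le> n \<Longrightarrow> Ck m f"
  unfolding Ck_def by auto

lemma Ck_shift: "Ck (Suc n) f \<Longrightarrow> Ck n (cdiff 1 f)"
  unfolding Ck_def cdiff_shift by auto

lemma poly_char: "Ck n (poly p) \<and> (\<forall>i\<le>n. \<forall>x\<in>{-1..1}. cdiff i (poly p) x = poly ((pderiv ^^ i) p) x)"
  by (rule Ck_char) (auto intro!: continuous_intros has_field_derivative_at_within[OF poly_DERIV])

lemma Ck_poly: "Ck n (poly p)" using poly_char by blast
lemma cdiff_poly: "x \<in> {-1..1} \<Longrightarrow> cdiff i (poly p) x = poly ((pderiv ^^ i) p) x"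
  using poly_char[of i p] by auto

lemma Ck_lin: assumes f: "Ck n f" and g: "Ck n g" shows "Ck n (\<lambda>x. a * f x + b * g x)"
proof -
  let ?G = "\<lambda>i x. a * cdiff i f x + b * cdiff i g x"
  have "\<forall>i\<le>n. continuous_on {-1..1} (?G i)" using f g unfolding Ck_def by (auto intro!: continuous_intros)
  moreover have "\<forall>i<n. \<forall>x\<in>{-1..1}. (?G i has_real_derivative ?G (Suc i) x) (at x within {-1..1})"
    using f g unfolding Ck_def by (auto intro!: DERIV_add DERIV_cmult)
  ultimately show ?thesis using Ck_char[of ?G "\<lambda>x. a * f x + b * g x" n] by auto
qed

lemma Ck_mult_x: assumes f: "Ck n f" shows "Ck n (\<lambda>x. f x * x)"
proof -
  let ?G = "\<lambda>i x. x * cdiff i f x + real i * cdiff (i - 1) f x"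
  have "\<forall>i\<le>n. continuous_on {-1..1} (?G i)" using f unfolding Ck_def
    by (auto intro!: continuous_intros)
  moreover have "\<forall>i<n. \<forall>x\<in>{-1..1}. (?G i has_real_derivative ?G (Suc i) x) (at x within {-1..1})"
  proof (intro allI impI ballI)
    fix i x assume i: "i < n" and x: "x \<in> {-1..(1::real)}"
    have d1: "(cdiff i f has_real_derivative cdiff (Suc i) f x) (at x within {-1..1})"
      using f i x unfolding Ck_def by auto
    show "(?G i has_real_derivative ?G (Suc i) x) (at x within {-1..1})"
    proof (cases i)
      case 0
      show ?thesis using d1 unfolding 0
        by (auto intro!: derivative_eq_intros simp: algebra_simps)
    next
      case (Suc j)
      have d2: "(cdiff j f has_real_derivative cdiff (Suc j) f x) (at x within {-1..1})"
        using f i x Suc unfolding Ck_def by auto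
      show ?thesis using d1 d2 unfolding Suc
        by (auto intro!: derivative_eq_intros simp: algebra_simps)
    qed
  qed
  ultimately show ?thesis using Ck_char[of ?G "\<lambda>x. f x * x" n] by (auto simp: mult.commute)
qed

lemma Ck_mult_poly: assumes f: "Ck n f" shows "Ck n (\<lambda>x. f x * poly p x)"
proof (induction p rule: pCons_induct)
  case 0
  have "(\<lambda>x. f x * poly 0 x) = (\<lambda>x. 0 * f x + 0 * f x)" by simp
  then show ?case using Ck_lin[OF f f] by metis
next
  case (pCons a p)
  have "(\<lambda>x. f x * poly (pCons a p) x) = (\<lambda>x. a * f x + 1 * ((\<lambda>x. f x * poly p x) x * x))"
    by (auto simp: algebra_simps)
  then show ?case using Ck_lin[OF f Ck_mult_x[OF pCons.IH]] by metis
qed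




definition linP :: "(real poly \<Rightarrow> real) \<Rightarrow> bool" where
  "linP l \<longleftrightarrow> (\<forall>p q a b. l (smult a p + smult b q) = a * l p + b * l q)"

lemma linP_0: "linP l \<Longrightarrow> l 0 = 0"
  unfolding linP_def by (metis add.right_neutral mult_zero_left smult_0_left)

lemma linP_add: "linP l \<Longrightarrow> l (p + q) = l p + l q"
  unfolding linP_def by (metis mult_1 smult_1_left)

lemma linP_smult: "linP l \<Longrightarrow> l (smult c p) = c * l p"
  using linP_0[of l] unfolding linP_def by (metis add.right_neutral mult_zero_left smult_0_left)

lemma linP_sum: "linP l \<Longrightarrow> l (\<Sum>i\<in>I. P i) = (\<Sum>i\<in>I. l (P i))"
proof (induction I rule: infinite_finite_induct)
  case (infinite A) then show ?case by (simp add: linP_0)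
next
  case empty then show ?case by (simp add: linP_0)
next
  case (insert x F) then show ?case by (simp add: linP_add)
qed

lemma lin_expand: assumes "linP l" "degree \<phi> \<le> N"
  shows "l \<phi> = (\<Sum>j\<le>N. coeff \<phi> j * l (monom 1 j))"
proof -
  have "l \<phi> = l (\<Sum>j\<le>N. smult (coeff \<phi> j) (monom 1 j))"
    using poly_as_sum_of_monoms'[OF assms(2)] by (simp add: smult_monom)
  also have "\<dots> = (\<Sum>j\<le>N. coeff \<phi> j * l (monom 1 j))"
    using assms(1) by (simp add: linP_sum linP_smult)
  finally show ?thesis .
qed

interpretation PV: vector_space "smult :: real \<Rightarrow> real poly \<Rightarrow> real poly"
  by unfold_locales (simp_all add: smult_add_right smult_add_left)

interpretation PP: vector_space_pair "smult :: real \<Rightarrow> real poly \<Rightarrow> real poly" "smult :: real \<Rightarrow> real poly \<Rightarrow> real poly"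
  by unfold_locales

lemma span_monoms: "PV.span ((\<lambda>i. monom 1 i) ` {..r}) = {q :: real poly. degree q \<le> r}"
proof (rule PV.span_subspace)
  show "(\<lambda>i. monom 1 i) ` {..r} \<subseteq> {q :: real poly. degree q \<le> r}"
    by (auto simp: degree_monom_eq)
  show "{q :: real poly. degree q \<le> r} \<subseteq> PV.span ((\<lambda>i. monom 1 i) ` {..r})"
  proof
    fix q :: "real poly" assume "q \<in> {q. degree q \<le> r}"
    then have "q = (\<Sum>j\<le>r. smult (coeff q j) (monom 1 j))"
      using poly_as_sum_of_monoms'[of q r] by (simp add: smult_monom)
    also have "\<dots> \<in> PV.span ((\<lambda>i. monom 1 i) ` {..r})"
      by (intro PV.span_sum PV.span_scale PV.span_base) auto
    finally show "q \<in> PV.span ((\<lambda>i. monom 1 i) ` {..r})" .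
  qed
  show "PV.subspace {q :: real poly. degree q \<le> r}"
    unfolding PV.subspace_def
    by (auto intro: order.trans[OF degree_add_le] order.trans[OF degree_smult_le])
qed

lemma indep_monoms: "PV.independent ((\<lambda>i. monom (1::real) i) ` {..r})"
  unfolding PV.independent_explicit_module
proof (intro allI impI)
  fix t u v assume t: "finite t" "t \<subseteq> (\<lambda>i. monom (1::real) i) ` {..r}"
    and s: "(\<Sum>v\<in>t. smult (u v) v) = 0" and v: "v \<in> t"
  obtain i where vi: "v = monom 1 i" using t v by auto
  have "0 = coeff (\<Sum>v\<in>t. smult (u v) v) i" using s by simp
  also have "\<dots> = (\<Sum>w\<in>t. u w * (if w = v then 1 else 0))"
    unfolding coeff_sum
  proof (rule sum.cong[OF refl])
    fix w assume "w \<in> t"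
    then obtain j where "w = monom 1 j" using t by auto
    then show "coeff (smult (u w) w) i = u w * (if w = v then 1 else 0)"
      using vi by (auto simp: coeff_monom monom_eq_iff')
  qed
  also have "\<dots> = u v" using t v by (simp add: if_distrib sum.delta cong: if_cong)
  finally show "u v = 0" by simp
qed

lemma square_solve:
  fixes ls :: "(real poly \<Rightarrow> real) list"
  assumes len: "length ls = Suc r"
    and lin: "\<forall>l\<in>set ls. linP l"
    and inj: "\<forall>q. degree q \<le> r \<longrightarrow> (\<forall>j<Suc r. (ls!j) q = 0) \<longrightarrow> q = 0"
  shows "\<exists>q. degree q \<le> r \<and> (\<forall>j<Suc r. (ls!j) q = b j)"
proof -
  define T where "T q = (\<Sum>j<Suc r. monom ((ls!j) q) j)" for q
  have linj: "linP (ls!j)" if "j < Suc r" for j using lin len that by auto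
  have cT: "coeff (T q) j = (if j < Suc r then (ls!j) q else 0)" for q j
    unfolding T_def coeff_sum by (simp add: coeff_monom if_distrib sum.delta cong: if_cong)
  have dT: "degree (T q) \<le> r" for q by (rule degree_le) (auto simp: cT)
  have linT: "Vector_Spaces.linear smult smult T"
    unfolding Vector_Spaces.linear_iff
  proof (intro conjI allI)
    show "vector_space (smult :: real \<Rightarrow> real poly \<Rightarrow> real poly)" by unfold_locales
    show "vector_space (smult :: real \<Rightarrow> real poly \<Rightarrow> real poly)" by unfold_locales
    fix x y show "T (x + y) = T x + T y"
      by (rule poly_eqI) (auto simp: cT linP_add[OF linj])
  next
    fix c x show "T (smult c x) = smult c (T x)"
      by (rule poly_eqI) (auto simp: cT linP_smult[OF linj])
  qed
  define B where "B = (\<lambda>i. monom (1::real) i) ` {..r}"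
  have spanB: "PV.span B = {q. degree q \<le> r}" unfolding B_def by (rule span_monoms)
  have T0: "q = 0" if "degree q \<le> r" "T q = 0" for q
    using inj that cT by (metis coeff_0)
  have injT: "inj_on T (PV.span B)"
  proof (rule inj_onI)
    fix x y assume xy: "x \<in> PV.span B" "y \<in> PV.span B" "T x = T y"
    have "T (x - y) = 0" using PP.linear_diff[OF linT] xy by simp
    moreover have "degree (x - y) \<le> r" using xy spanB
      by (auto intro: order.trans[OF degree_diff_le])
    ultimately show "x = y" using T0 by fastforce
  qed
  have indS: "PV.independent (T ` B)"
    by (rule PP.linear_independent_injective_image[OF linT _ injT]) (simp add: B_def indep_monoms)
  have finB: "finite B" and cardB: "card B = Suc r"
    unfolding B_def by (auto simp: card_image inj_on_def monom_eq_iff')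
  have BsB: "B \<subseteq> PV.span B" by (rule PV.span_superset)
  have cardS: "card (T ` B) = Suc r" using card_image[OF inj_on_subset[OF injT BsB]] cardB by simp
  define P where "P = (\<Sum>j\<le>r. monom (b j) j)"
  have cP: "coeff P j = (if j \<le> r then b j else 0)" for j
    unfolding P_def coeff_sum by (simp add: coeff_monom if_distrib sum.delta cong: if_cong)
  have dP: "degree P \<le> r" by (rule degree_le) (auto simp: cP)
  have "P \<in> PV.span (T ` B)"
  proof (rule ccontr)
    assume nP: "P \<notin> PV.span (T ` B)"
    have "PV.independent (insert P (T ` B))" by (rule PV.independent_insertI[OF nP indS])
    moreover have "insert P (T ` B) \<subseteq> PV.span B" using spanB dP dT by auto
    ultimately have "card (insert P (T ` B)) \<le> card B"
      using PV.independent_span_bound[OF finB] by blast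
    moreover have "P \<notin> T ` B" using nP PV.span_superset by blast
    moreover have "finite (T ` B)" using finB by simp
    ultimately show False using cardS cardB by simp
  qed
  then obtain q where q: "q \<in> PV.span B" "T q = P"
    using PP.linear_span_image[OF linT] by auto
  show ?thesis
  proof (intro exI conjI allI impI)
    show "degree q \<le> r" using q spanB by auto
    fix j assume "j < Suc r"
    then show "(ls!j) q = b j" using arg_cong[OF q(2), of "\<lambda>p. coeff p j"] cT cP by simp
  qed
qed




lemma funpow_pderiv_Suc: "(pderiv ^^ Suc i) q = (pderiv ^^ i) (pderiv q)"
  by (simp add: funpow_Suc_right del: funpow.simps)

lemma root_mult: "(\<forall>i<m. poly ((pderiv^^i) q) a = 0) \<Longrightarrow> [:-a,1:]^m dvd (q::real poly)"
proof (induction m arbitrary: q)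
  case 0 then show ?case by simp
next
  case (Suc m)
  have qa: "poly q a = 0" using Suc.prems[rule_format, of 0] by simp
  have "\<forall>i<m. poly ((pderiv^^i) (pderiv q)) a = 0"
    using Suc.prems by (auto simp flip: funpow_pderiv_Suc)
  then have d: "[:-a,1:]^m dvd pderiv q" by (rule Suc.IH)
  show ?case
  proof (cases "q = 0")
    case True then show ?thesis by simp
  next
    case False
    have o: "order a q = Suc (order a (pderiv q))" by (rule order_pderiv[OF False qa])
    show ?thesis
    proof (cases "pderiv q = 0")
      case True
      then have "degree q = 0" by (simp add: pderiv_eq_0_iff)
      then obtain c where c: "q = [:c:]" by (metis degree_0_id)
      then have "q = 0" using qa by simp
      then show ?thesis using False by simp
    next
      case False
      then have "m \<le> order a (pderiv q)" using d order_divides by blast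
      then have "Suc m \<le> order a q" using o by simp
      then show ?thesis unfolding order_divides by simp
    qed
  qed
qed

lemma prod_div: assumes b: "[:-1,1:]^b dvd p" and a: "[:1,1:]^a dvd (p::real poly)"
  shows "[:-1,1:]^b * [:1,1:]^a dvd p"
proof (cases "p = 0")
  case True then show ?thesis by simp
next
  case False
  obtain g where g: "p = [:-1,1:]^b * g" using b by (auto elim: dvdE)
  have o0: "order (-1) ([:-1,1:]^b :: real poly) = 0"
    by (rule order_0I) simp
  have "order (-1) p = order (-1) ([:-1,1:]^b :: real poly) + order (-1) g"
    using Polynomial.order_mult[of "[:-1,1:]^b" g "-1"] False g by simp
  then have og: "order (-1) p = order (-1) g" using o0 by simp
  have "a \<le> order (-1) p" using a False order_divides[of "-1" a p] by simp
  then have "[:1,1:]^a dvd g" using og order_divides[of "-1" a g] by simp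
  then show ?thesis unfolding g by (rule mult_dvd_mono[OF dvd_refl])
qed

lemma hom_zero:
  fixes r k kI :: nat and Iscr :: "(real \<Rightarrow> real) \<Rightarrow> real" and q :: "real poly"
  assumes kr: "k \<le> r"
    and Iscr_lin: "\<And>f g a b. Ck kI f \<Longrightarrow> Ck kI g \<Longrightarrow>
        Iscr (\<lambda>x. a * f x + b * g x) = a * Iscr f + b * Iscr g"
    and A1: "A1 r k Iscr"
    and dq: "degree q \<le> r"
    and J1: "1 \<le> k \<longrightarrow> (\<forall>i\<le>(k - 1) div 2. poly ((pderiv ^^ i) q) (-1) = 0)"
    and J2: "2 \<le> k \<longrightarrow> (\<forall>i\<in>{1..k div 2}. poly ((pderiv ^^ i) q) 1 = 0)"
    and J3: "\<forall>\<phi>. inP (int r - int k) \<phi> \<longrightarrow>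
        Iscr (\<lambda>t. poly (pderiv q) t * poly \<phi> t) + (if k = 0 then poly q (-1) * poly \<phi> (-1) else 0) = 0"
  shows "q = 0"
proof -
  have inP0: "inP s 0" for s by (simp add: inP_def)
  have const: "q = 0" if "pderiv q = 0" "poly q (-1) = 0"
  proof -
    have "degree q = 0" using that by (simp add: pderiv_eq_0_iff)
    then obtain c where c: "q = [:c:]" by (metis degree_0_id)
    then show "q = 0" using that(2) by simp
  qed
  show ?thesis
  proof (cases "k = 0")
    case k0: True
    have "\<forall>\<psi>. inP (int r - int (max 1 k)) \<psi> \<longrightarrow>
        (\<forall>\<phi>. inP (int r - int (max 1 k)) \<phi> \<longrightarrow>
            Iscr (\<lambda>t. (1 - t) ^ (k div 2) * (1 + t) ^ absfl k * poly \<psi> t * poly \<phi> t) = 0)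
        \<longrightarrow> \<psi> = 0" using A1 unfolding A1_def by blast
    then have A1': "\<And>\<psi>. inP (int r - 1) \<psi> \<Longrightarrow> (\<forall>\<phi>. inP (int r - 1) \<phi> \<longrightarrow>
            Iscr (\<lambda>t. (1 + t) * poly \<psi> t * poly \<phi> t) = 0) \<Longrightarrow> \<psi> = 0"
      using k0 by (simp add: absfl_def)
    have "inP (int r - 1) (pderiv q)"
    proof (cases "r = 0")
      case True then have "pderiv q = 0" using dq by (simp add: pderiv_eq_0_iff)
      then show ?thesis by (simp add: inP0)
    next
      case False then show ?thesis using dq by (auto simp: inP_def degree_pderiv)
    qed
    moreover have "\<forall>\<phi>. inP (int r - 1) \<phi> \<longrightarrow> Iscr (\<lambda>t. (1 + t) * poly (pderiv q) t * poly \<phi> t) = 0"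
    proof (intro allI impI)
      fix \<phi> assume ph: "inP (int r - 1) \<phi>"
      have "inP (int r - int k) ([:1,1:] * \<phi>)"
      proof (cases "\<phi> = 0")
        case True then show ?thesis by (simp add: inP0)
      next
        case False
        have "degree ([:1,1:] * \<phi>) = 1 + degree \<phi>" using False by (subst degree_mult_eq) auto
        then show ?thesis using ph k0 False by (auto simp: inP_def split: if_splits)
      qed
      then have "Iscr (\<lambda>t. poly (pderiv q) t * poly ([:1,1:] * \<phi>) t) = 0"
        using J3 k0 by force
      moreover have "(\<lambda>t. poly (pderiv q) t * poly ([:1,1:] * \<phi>) t) = (\<lambda>t. (1 + t) * poly (pderiv q) t * poly \<phi> t)"
        by (auto simp: algebra_simps)
      ultimately show "Iscr (\<lambda>t. (1 + t) * poly (pderiv q) t * poly \<phi> t) = 0" by simp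
    qed
    ultimately have pq: "pderiv q = 0" by (rule A1')
    have "inP (int r - int k) 1" using k0 by (simp add: inP_def)
    then have "Iscr (\<lambda>t. poly (pderiv q) t * poly 1 t) + poly q (-1) * poly 1 (-1) = 0"
      using J3 k0 by force
    moreover have "Iscr (\<lambda>t. poly (pderiv q) t * poly 1 t) = 0"
    proof -
      have "(\<lambda>t. poly (pderiv q) t * poly 1 t) = (\<lambda>x. 0 * poly 0 x + 0 * poly 0 x)" using pq by simp
      then show ?thesis using Iscr_lin[OF Ck_poly Ck_poly, of 0 0 0 0] by simp
    qed
    ultimately have "poly q (-1) = 0" by simp
    then show ?thesis using const pq by blast
  next
    case kpos: False
    define a1 where "a1 = (k - 1) div 2"
    define b1 where "b1 = k div 2"
    have "\<forall>i<a1. poly ((pderiv^^i) (pderiv q)) (-1) = 0"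
    proof (intro allI impI)
      fix i assume "i < a1"
      then have "Suc i \<le> (k - 1) div 2" unfolding a1_def by simp
      moreover have "\<forall>i\<le>(k - 1) div 2. poly ((pderiv ^^ i) q) (-1) = 0" using J1 kpos by simp
      ultimately have "poly ((pderiv^^Suc i) q) (-1) = 0" by blast
      then show "poly ((pderiv^^i) (pderiv q)) (-1) = 0" by (simp only: funpow_pderiv_Suc)
    qed
    from root_mult[OF this] have da: "[:1,1:]^a1 dvd pderiv q" by simp
    have "\<forall>i<b1. poly ((pderiv^^i) (pderiv q)) 1 = 0"
    proof (intro allI impI)
      fix i assume "i < b1"
      then have "2 \<le> k" "Suc i \<in> {1..k div 2}" unfolding b1_def by auto
      then have "poly ((pderiv^^Suc i) q) 1 = 0" using J2 by blast
      then show "poly ((pderiv^^i) (pderiv q)) 1 = 0" by (simp only: funpow_pderiv_Suc)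
    qed
    from root_mult[OF this] have db: "[:-1,1:]^b1 dvd pderiv q" by simp
    have "[:-1,1:]^b1 * [:1,1:]^a1 dvd pderiv q"
      by (rule prod_div[OF db da])
    then obtain \<psi> where psi: "pderiv q = [:-1,1:]^b1 * [:1,1:]^a1 * \<psi>" by (auto elim: dvdE)
    define \<psi>' where "\<psi>' = smult ((-1)^b1) \<psi>"
    have ptq: "poly (pderiv q) t = (1 - t) ^ b1 * (1 + t) ^ a1 * poly \<psi>' t" for t
    proof -
      have "(t - 1) ^ b1 = (-1)^b1 * (1 - t) ^ b1"
        by (metis minus_diff_eq mult_1 mult_minus_left power_minus)
      then show ?thesis unfolding psi \<psi>'_def by (simp add: algebra_simps)
    qed
    have "inP (int r - int (max 1 k)) \<psi>'"
    proof (cases "\<psi> = 0")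
      case True then show ?thesis by (simp add: \<psi>'_def inP0)
    next
      case False
      have "degree (pderiv q) = b1 + a1 + degree \<psi>"
        unfolding psi using False by (simp add: degree_mult_eq degree_power_eq)
      moreover have "degree (pderiv q) \<le> r - 1" using dq by (simp add: degree_pderiv)
      moreover have "b1 + a1 = k - 1" unfolding a1_def b1_def using kpos by presburger
      ultimately show ?thesis using kpos kr by (simp add: inP_def \<psi>'_def max_def)
    qed
    moreover have "\<forall>\<phi>. inP (int r - int (max 1 k)) \<phi> \<longrightarrow>
            Iscr (\<lambda>t. (1 - t) ^ (k div 2) * (1 + t) ^ absfl k * poly \<psi>' t * poly \<phi> t) = 0"
    proof (intro allI impI)
      fix \<phi> assume "inP (int r - int (max 1 k)) \<phi>"
      then have "inP (int r - int k) \<phi>" using kpos by (simp add: max_def)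
      then have "Iscr (\<lambda>t. poly (pderiv q) t * poly \<phi> t) = 0" using J3 kpos by force
      moreover have "(\<lambda>t. poly (pderiv q) t * poly \<phi> t) = (\<lambda>t. (1 - t) ^ (k div 2) * (1 + t) ^ absfl k * poly \<psi>' t * poly \<phi> t)"
        using kpos by (simp add: ptq absfl_def a1_def b1_def)
      ultimately show "Iscr (\<lambda>t. (1 - t) ^ (k div 2) * (1 + t) ^ absfl k * poly \<psi>' t * poly \<phi> t) = 0" by simp
    qed
    ultimately have "\<psi>' = 0" using A1 unfolding A1_def by blast
    then have "\<psi> = 0" by (simp add: \<psi>'_def)
    then have "pderiv q = 0" by (simp add: psi)
    moreover have "poly q (-1) = 0" using J1 kpos by force
    ultimately show ?thesis using const by blast
  qed
qed




lemma funpow_pderiv_lin: "(pderiv^^i) (smult a p + smult b q) = smult a ((pderiv^^i) p) + smult b ((pderiv^^i) (q::real poly))"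
  by (induction i) (simp_all add: pderiv_add pderiv_smult)

lemma funpow_pderiv_diff: "(pderiv^^i) (p - q) = (pderiv^^i) p - (pderiv^^i) (q::real poly)"
  by (induction i) (simp_all add: pderiv_diff)

lemma inP_deg: "k \<le> r \<Longrightarrow> inP (int r - int k) \<phi> \<longleftrightarrow> degree \<phi> \<le> r - k"
  by (auto simp: inP_def)

lemma uniq:
  fixes r k kI :: nat and Iscr :: "(real \<Rightarrow> real) \<Rightarrow> real"
  assumes kr: "k \<le> r"
    and Iscr_lin: "\<And>f g a b. Ck kI f \<Longrightarrow> Ck kI g \<Longrightarrow>
        Iscr (\<lambda>x. a * f x + b * g x) = a * Iscr f + b * Iscr g"
    and A1: "A1 r k Iscr"
    and d1: "degree q1 \<le> r" and c1: "J_conds r k Iscr Ical v q1"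
    and d2: "degree q2 \<le> r" and c2: "J_conds r k Iscr Ical v q2"
  shows "q1 = q2"
proof -
  have ckP: "\<And>a b. Ck kI (\<lambda>t. poly a t * poly b t)" using Ck_mult_poly[OF Ck_poly] .
  have "q1 - q2 = 0"
  proof (rule hom_zero[OF kr Iscr_lin A1])
    show "degree (q1 - q2) \<le> r" using d1 d2 by (auto intro: order.trans[OF degree_diff_le])
    show "1 \<le> k \<longrightarrow> (\<forall>i\<le>(k - 1) div 2. poly ((pderiv ^^ i) (q1 - q2)) (- 1) = 0)"
      using c1 c2 unfolding J_conds_def by (simp add: funpow_pderiv_diff)
    show "2 \<le> k \<longrightarrow> (\<forall>i\<in>{1..k div 2}. poly ((pderiv ^^ i) (q1 - q2)) 1 = 0)"
      using c1 c2 unfolding J_conds_def by (simp add: funpow_pderiv_diff)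
    show "\<forall>\<phi>. inP (int r - int k) \<phi> \<longrightarrow>
        Iscr (\<lambda>t. poly (pderiv (q1 - q2)) t * poly \<phi> t) + (if k = 0 then poly (q1 - q2) (-1) * poly \<phi> (-1) else 0) = 0"
    proof (intro allI impI)
      fix \<phi> assume ph: "inP (int r - int k) \<phi>"
      have e1: "Iscr (\<lambda>t. poly (pderiv q1) t * poly \<phi> t) + (if k = 0 then poly q1 (-1) * poly \<phi> (-1) else 0)
        = Iscr (\<lambda>t. Ical (cdiff 1 v) t * poly \<phi> t) + (if k = 0 then v (-1) * poly \<phi> (-1) else 0)"
        using c1 ph unfolding J_conds_def by blast
      have e2: "Iscr (\<lambda>t. poly (pderiv q2) t * poly \<phi> t) + (if k = 0 then poly q2 (-1) * poly \<phi> (-1) else 0)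
        = Iscr (\<lambda>t. Ical (cdiff 1 v) t * poly \<phi> t) + (if k = 0 then v (-1) * poly \<phi> (-1) else 0)"
        using c2 ph unfolding J_conds_def by blast
      have "(\<lambda>t. poly (pderiv (q1 - q2)) t * poly \<phi> t) =
          (\<lambda>t. 1 * (poly (pderiv q1) t * poly \<phi> t) + (-1) * (poly (pderiv q2) t * poly \<phi> t))"
        by (auto simp: pderiv_diff algebra_simps)
      then have "Iscr (\<lambda>t. poly (pderiv (q1 - q2)) t * poly \<phi> t) =
          Iscr (\<lambda>t. poly (pderiv q1) t * poly \<phi> t) - Iscr (\<lambda>t. poly (pderiv q2) t * poly \<phi> t)"
        using Iscr_lin[OF ckP ckP, of 1 "pderiv q1" \<phi> "-1" "pderiv q2" \<phi>] by simp
      then show "Iscr (\<lambda>t. poly (pderiv (q1 - q2)) t * poly \<phi> t) + (if k = 0 then poly (q1 - q2) (-1) * poly \<phi> (-1) else 0) = 0"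
        using e1 e2 by (cases "k = 0") (auto simp: algebra_simps)
    qed
  qed
  then show ?thesis by simp
qed




lemma map_ev: "map (\<lambda>l. l q) (map F xs) = map G xs \<Longrightarrow> x \<in> set xs \<Longrightarrow> F x q = G x"
  by (simp add: map_eq_conv)

lemma mem_ev: "\<forall>l\<in>set (map F xs). l q = 0 \<Longrightarrow> x \<in> set xs \<Longrightarrow> F x q = 0"
  by simp

theorem mainTheorem1:
  fixes r k kI kcI :: nat
    and Iscr :: "(real \<Rightarrow> real) \<Rightarrow> real"
    and Ical :: "(real \<Rightarrow> real) \<Rightarrow> (real \<Rightarrow> real)"
  assumes kr: "k \<le> r"
    and Iscr_lin: "\<And>f g a b. Ck kI f \<Longrightarrow> Ck kI g \<Longrightarrow>
        Iscr (\<lambda>x. a * f x + b * g x) = a * Iscr f + b * Iscr g"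
    and Iscr_loc: "\<And>f g. Ck kI f \<Longrightarrow> Ck kI g \<Longrightarrow> (\<forall>x\<in>{-1..1}. f x = g x) \<Longrightarrow> Iscr f = Iscr g"
    and Ical_lin: "\<And>f g a b. Ck kcI f \<Longrightarrow> Ck kcI g \<Longrightarrow>
        \<forall>x\<in>{-1..1}. Ical (\<lambda>y. a * f y + b * g y) x = a * Ical f x + b * Ical g x"
    and Ical_loc: "\<And>f g. Ck kcI f \<Longrightarrow> Ck kcI g \<Longrightarrow> (\<forall>x\<in>{-1..1}. f x = g x) \<Longrightarrow>
        \<forall>x\<in>{-1..1}. Ical f x = Ical g x"
    and Ical_reg: "\<And>l v. Ck (max kcI l) v \<Longrightarrow> Ck l (Ical v)"
    and A1: "A1 r k Iscr"
  shows "(\<forall>v. Ck (max (k div 2 - 1) (max kI kcI) + 1) v \<longrightarrow>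
            (\<exists>!q. degree q \<le> r \<and> J_conds r k Iscr Ical v q))
       \<and> (\<forall>rt::nat. (\<forall>p. degree p \<le> rt \<longrightarrow> (\<forall>x\<in>{-1..1}. Ical (poly p) x = poly p x)) \<longrightarrow>
            (\<forall>p. degree p \<le> min (rt + 1) r \<longrightarrow> Jhat r k Iscr Ical (poly p) = p))"
proof (intro conjI allI impI)
  have ckP: "\<And>a b. Ck kI (\<lambda>t. poly a t * poly b t)" using Ck_mult_poly[OF Ck_poly] .
  note uniqL = uniq[OF kr Iscr_lin A1]
  fix v :: "real \<Rightarrow> real"
  assume cv: "Ck (max (k div 2 - 1) (max kI kcI) + 1) v"
  have cv1: "Ck (max kcI kI) (cdiff 1 v)"
  proof -
    have "Ck (max (k div 2 - 1) (max kI kcI)) (cdiff 1 v)" using Ck_shift[of "max (k div 2 - 1) (max kI kcI)" v] cv by simp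
    then show ?thesis by (rule Ck_mono) (simp add: le_max_iff_disj, linarith)
  qed
  have G: "Ck kI (Ical (cdiff 1 v))" using Ical_reg cv1 by blast
  have GP: "\<And>\<phi>. Ck kI (\<lambda>t. Ical (cdiff 1 v) t * poly \<phi> t)" using Ck_mult_poly[OF G] .
  define R where "R \<phi> = Iscr (\<lambda>t. Ical (cdiff 1 v) t * poly \<phi> t) + (if k = 0 then v (-1) * poly \<phi> (-1) else 0)" for \<phi>
  define LH where "LH q \<phi> = Iscr (\<lambda>t. poly (pderiv q) t * poly \<phi> t) + (if k = 0 then poly q (-1) * poly \<phi> (-1) else 0)" for q \<phi>
  have linR: "linP R"
    unfolding linP_def
  proof (intro allI)
    fix p q :: "real poly" and a b :: real
    have "(\<lambda>t. Ical (cdiff 1 v) t * poly (smult a p + smult b q) t) =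
      (\<lambda>t. a * (Ical (cdiff 1 v) t * poly p t) + b * (Ical (cdiff 1 v) t * poly q t))"
      by (auto simp: algebra_simps)
    then show "R (smult a p + smult b q) = a * R p + b * R q"
      unfolding R_def using Iscr_lin[OF GP GP, of a p b q] by (auto simp: algebra_simps)
  qed
  have linLH: "linP (LH q)" for q
    unfolding linP_def
  proof (intro allI)
    fix p p' :: "real poly" and a b :: real
    have "(\<lambda>t. poly (pderiv q) t * poly (smult a p + smult b p') t) =
      (\<lambda>t. a * (poly (pderiv q) t * poly p t) + b * (poly (pderiv q) t * poly p' t))"
      by (auto simp: algebra_simps)
    then show "LH q (smult a p + smult b p') = a * LH q p + b * LH q p'"
      unfolding LH_def using Iscr_lin[OF ckP ckP, of a "pderiv q" p b "pderiv q" p'] by (auto simp: algebra_simps)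
  qed
  have linLHq: "linP (\<lambda>q. LH q \<phi>)" for \<phi>
    unfolding linP_def
  proof (intro allI)
    fix p p' :: "real poly" and a b :: real
    have "(\<lambda>t. poly (pderiv (smult a p + smult b p')) t * poly \<phi> t) =
      (\<lambda>t. a * (poly (pderiv p) t * poly \<phi> t) + b * (poly (pderiv p') t * poly \<phi> t))"
      by (auto simp: algebra_simps pderiv_add pderiv_smult)
    then show "LH (smult a p + smult b p') \<phi> = a * LH p \<phi> + b * LH p' \<phi>"
      unfolding LH_def using Iscr_lin[OF ckP ckP, of a "pderiv p" \<phi> b "pderiv p'" \<phi>] by (auto simp: algebra_simps)
  qed
  have lin1: "linP (\<lambda>q. poly ((pderiv^^i) q) x)" for i x
    unfolding linP_def by (simp add: funpow_pderiv_lin)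
  define n1 where "n1 = (if 1 \<le> k then (k - 1) div 2 + 1 else 0)"
  define L1 where "L1 = map (\<lambda>i (q::real poly). poly ((pderiv^^i) q) (-1)) [0..<n1]"
  define L2 where "L2 = map (\<lambda>i (q::real poly). poly ((pderiv^^i) q) 1) [1..<k div 2 + 1]"
  define L3 where "L3 = map (\<lambda>j q. LH q (monom 1 j)) [0..<r - k + 1]"
  define B1 where "B1 = map (\<lambda>i. cdiff i v (-1)) [0..<n1]"
  define B2 where "B2 = map (\<lambda>i. cdiff i v 1) [1..<k div 2 + 1]"
  define B3 where "B3 = map (\<lambda>j. R (monom 1 j)) [0..<r - k + 1]"
  define ls where "ls = L1 @ L2 @ L3"
  define bs where "bs = B1 @ B2 @ B3"
  have n1k: "n1 + k div 2 = k"
  proof (cases "k = 0")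
    case True then show ?thesis by (simp add: n1_def)
  next
    case False
    then have "n1 = (k - 1) div 2 + 1" by (simp add: n1_def)
    then show ?thesis using False by presburger
  qed
  have "length ls = n1 + k div 2 + (r - k + 1)" unfolding ls_def L1_def L2_def L3_def by simp
  then have len: "length ls = Suc r" using kr n1k by linarith
  have "length bs = n1 + k div 2 + (r - k + 1)" unfolding bs_def B1_def B2_def B3_def by simp
  then have lenb: "length bs = Suc r" using kr n1k by linarith
  have lin: "\<forall>l\<in>set ls. linP l"
    unfolding ls_def L1_def L2_def L3_def using lin1 linLHq by auto
  have inj: "\<forall>q. degree q \<le> r \<longrightarrow> (\<forall>j<Suc r. (ls!j) q = 0) \<longrightarrow> q = 0"
  proof (intro allI impI)
    fix q :: "real poly" assume dq: "degree q \<le> r" and z: "\<forall>j<Suc r. (ls!j) q = 0"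
    have z': "\<forall>l\<in>set ls. l q = 0" using z len by (auto simp: in_set_conv_nth)
    have z1: "\<forall>l\<in>set L1. l q = 0" and z2: "\<forall>l\<in>set L2. l q = 0" and z3': "\<forall>l\<in>set L3. l q = 0"
      using z' unfolding ls_def by auto
    show "q = 0"
    proof (rule hom_zero[OF kr Iscr_lin A1 dq])
      show "1 \<le> k \<longrightarrow> (\<forall>i\<le>(k - 1) div 2. poly ((pderiv ^^ i) q) (- 1) = 0)"
      proof (intro impI allI)
        fix i assume "1 \<le> k" "i \<le> (k - 1) div 2"
        then have "i \<in> set [0..<n1]" unfolding n1_def by auto
        then show "poly ((pderiv ^^ i) q) (- 1) = 0" using mem_ev[OF z1[unfolded L1_def]] by blast
      qed
      show "2 \<le> k \<longrightarrow> (\<forall>i\<in>{1..k div 2}. poly ((pderiv ^^ i) q) 1 = 0)"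
      proof (intro impI ballI)
        fix i assume "2 \<le> k" "i \<in> {1..k div 2}"
        then have "i \<in> set [1..<k div 2 + 1]" by auto
        then show "poly ((pderiv ^^ i) q) 1 = 0" using mem_ev[OF z2[unfolded L2_def]] by blast
      qed
      show "\<forall>\<phi>. inP (int r - int k) \<phi> \<longrightarrow>
        Iscr (\<lambda>t. poly (pderiv q) t * poly \<phi> t) + (if k = 0 then poly q (-1) * poly \<phi> (-1) else 0) = 0"
      proof (intro allI impI)
        fix \<phi> assume "inP (int r - int k) \<phi>"
        then have dph: "degree \<phi> \<le> r - k" using inP_deg[OF kr] by blast
        have z3: "LH q (monom 1 j) = 0" if "j \<le> r - k" for j
        proof -
          have "j \<in> set [0..<r - k + 1]" using that by auto
          then show ?thesis using mem_ev[OF z3'[unfolded L3_def]] by blast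
        qed
        have "LH q \<phi> = (\<Sum>j\<le>r - k. coeff \<phi> j * LH q (monom 1 j))" by (rule lin_expand[OF linLH dph])
        also have "\<dots> = 0" using z3 by simp
        finally show "Iscr (\<lambda>t. poly (pderiv q) t * poly \<phi> t) + (if k = 0 then poly q (-1) * poly \<phi> (-1) else 0) = 0"
          unfolding LH_def .
      qed
    qed
  qed
  obtain q where dq: "degree q \<le> r" and qs: "\<forall>j<Suc r. (ls!j) q = bs!j"
    using square_solve[OF len lin inj, of "\<lambda>j. bs!j"] by blast
  have "map (\<lambda>l. l q) ls = bs" by (rule nth_equalityI) (use len lenb qs in auto)
  then have "map (\<lambda>l. l q) L1 = B1 \<and> map (\<lambda>l. l q) L2 @ map (\<lambda>l. l q) L3 = B2 @ B3"
    unfolding ls_def bs_def by (subst append_eq_append_conv[symmetric]) (auto simp: L1_def B1_def)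
  then have e1: "map (\<lambda>l. l q) L1 = B1" and e2: "map (\<lambda>l. l q) L2 = B2" and e3: "map (\<lambda>l. l q) L3 = B3"
    by (auto simp: append_eq_append_conv L2_def B2_def)
  have J: "J_conds r k Iscr Ical v q"
    unfolding J_conds_def
  proof (intro conjI impI allI ballI)
    fix i assume "1 \<le> k" "i \<le> (k - 1) div 2"
    then have "i \<in> set [0..<n1]" unfolding n1_def by auto
    then show "poly ((pderiv ^^ i) q) (- 1) = cdiff i v (- 1)"
      using map_ev[OF e1[unfolded L1_def B1_def]] by blast
  next
    fix i assume "2 \<le> k" "i \<in> {1..k div 2}"
    then have "i \<in> set [1..<k div 2 + 1]" by auto
    then show "poly ((pderiv ^^ i) q) 1 = cdiff i v 1"
      using map_ev[OF e2[unfolded L2_def B2_def]] by blast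
  next
    fix \<phi> assume "inP (int r - int k) \<phi>"
    then have dph: "degree \<phi> \<le> r - k" using inP_deg[OF kr] by blast
    have z3: "LH q (monom 1 j) = R (monom 1 j)" if "j \<le> r - k" for j
    proof -
      have "j \<in> set [0..<r - k + 1]" using that by auto
      then show ?thesis using map_ev[OF e3[unfolded L3_def B3_def]] by blast
    qed
    have "LH q \<phi> = (\<Sum>j\<le>r - k. coeff \<phi> j * LH q (monom 1 j))" by (rule lin_expand[OF linLH dph])
    also have "\<dots> = (\<Sum>j\<le>r - k. coeff \<phi> j * R (monom 1 j))" using z3 by simp
    also have "\<dots> = R \<phi>" by (rule lin_expand[OF linR dph, symmetric])
    finally show "Iscr (\<lambda>t. poly (pderiv q) t * poly \<phi> t) + (if k = 0 then poly q (- 1) * poly \<phi> (- 1) else 0) =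
       Iscr (\<lambda>t. Ical (cdiff 1 v) t * poly \<phi> t) + (if k = 0 then v (- 1) * poly \<phi> (- 1) else 0)"
      unfolding LH_def R_def .
  qed
  show "\<exists>!q. degree q \<le> r \<and> J_conds r k Iscr Ical v q"
    using dq J uniqL by blast
next
  have ckP: "\<And>a b. Ck kI (\<lambda>t. poly a t * poly b t)" using Ck_mult_poly[OF Ck_poly] .
  note uniqL = uniq[OF kr Iscr_lin A1]
  fix rt :: nat and p :: "real poly"
  assume pres: "\<forall>p. degree p \<le> rt \<longrightarrow> (\<forall>x\<in>{-1..1}. Ical (poly p) x = poly p x)"
    and dp: "degree p \<le> min (rt + 1) r"
  have c1: "Ck (max kcI kI) (cdiff 1 (poly p))" using Ck_shift[OF Ck_poly] .
  have G: "Ck kI (Ical (cdiff 1 (poly p)))" using Ical_reg c1 by blast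
  have e1: "\<forall>x\<in>{-1..1}. Ical (cdiff 1 (poly p)) x = Ical (poly (pderiv p)) x"
    by (rule Ical_loc) (use Ck_shift[OF Ck_poly] Ck_poly cdiff_poly[of _ 1 p] in auto)
  have "degree (pderiv p) \<le> rt" using dp by (simp add: degree_pderiv, linarith)
  then have e2: "\<forall>x\<in>{-1..1}. Ical (cdiff 1 (poly p)) x = poly (pderiv p) x" using e1 pres by auto
  have e3: "Iscr (\<lambda>t. Ical (cdiff 1 (poly p)) t * poly \<phi> t) = Iscr (\<lambda>t. poly (pderiv p) t * poly \<phi> t)" for \<phi>
    by (rule Iscr_loc[OF Ck_mult_poly[OF G] ckP]) (use e2 in auto)
  have J: "J_conds r k Iscr Ical (poly p) p"
    unfolding J_conds_def using e3 by (auto simp: cdiff_poly)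
  have dpr: "degree p \<le> r" using dp by simp
  show "Jhat r k Iscr Ical (poly p) = p"
    unfolding Jhat_def
  proof (rule the_equality)
    show "degree p \<le> r \<and> J_conds r k Iscr Ical (poly p) p" using dpr J by blast
    fix q assume "degree q \<le> r \<and> J_conds r k Iscr Ical (poly p) q"
    then show "q = p" using uniqL[OF _ _ dpr J] by blast
  qed
qed


end
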